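(* There is $c_1>0$ (depending on $d,\gamma,\chi$) such that for all $N$ large enough, $$\inf_{x\in\partial B}P_x[H_G<H_\Delta]\ge c_1N^{\gamma-1},$$ where $G=\{x\in B:\mathrm{dist}(x,\partial B)\ge\chi N/2\}$.
   Context: Let $d\ge3$, $\gamma\in(\frac1{d-1},1)$, $\chi\in(0,\frac14)$. Identify $\mathbb T_N^d$ with $\{0,\dots,N-1\}^d$. Let $L=2N^\gamma+\chi N$, $B=\bigcup_{x\in[L,N-L]^d\cap\mathbb Z^d}B(x,\chi N)$ (Euclidean balls), $\Delta=\big(\bigcup_{x\in B}B(x,N^\gamma)\big)^c$, as subsets of $\mathbb T_N^d$. $\partial K=\{x\in K:\exists y\notin K,|x-y|=1\}$; $\mathrm{dist}$ is Euclidean distance. $P_x$ is the law of simple random walk on $\mathbb T_N^d$ started at $x$, $H_K=\inf\{k\ge0:X_k\in K\}$. *)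

theory Defs
  imports "HOL-Probability.Probability"
begin

text \<open>Discrete torus T_N^d, identified with {0,...,N-1}^d; points are functions
  nat => int, with coordinates i < d in {0..N-1} and coordinates i >= d equal to 0.\<close>

definition torus :: "nat \<Rightarrow> nat \<Rightarrow> (nat \<Rightarrow> int) set" where
  "torus N d = {x. (\<forall>i<d. 0 \<le> x i \<and> x i < int N) \<and> (\<forall>i\<ge>d. x i = 0)}"

definition tdist :: "nat \<Rightarrow> nat \<Rightarrow> (nat \<Rightarrow> int) \<Rightarrow> (nat \<Rightarrow> int) \<Rightarrow> real" where
  "tdist N d x y = sqrt (\<Sum>i<d. (real_of_int (min \<bar>x i - y i\<bar> (int N - \<bar>x i - y i\<bar>)))\<^sup>2)"

definition tball :: "nat \<Rightarrow> nat \<Rightarrow> (nat \<Rightarrow> int) \<Rightarrow> real \<Rightarrow> (nat \<Rightarrow> int) set" where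
  "tball N d x r = {y \<in> torus N d. tdist N d x y \<le> r}"

definition tbdry :: "nat \<Rightarrow> nat \<Rightarrow> (nat \<Rightarrow> int) set \<Rightarrow> (nat \<Rightarrow> int) set" where
  "tbdry N d K = {x \<in> K. \<exists>y \<in> torus N d - K. tdist N d x y = 1}"

definition tsetdist :: "nat \<Rightarrow> nat \<Rightarrow> (nat \<Rightarrow> int) \<Rightarrow> (nat \<Rightarrow> int) set \<Rightarrow> real" where
  "tsetdist N d x K = Inf (tdist N d x ` K)"

definition Lval :: "real \<Rightarrow> real \<Rightarrow> nat \<Rightarrow> real" where
  "Lval \<gamma> chi N = 2 * real N powr \<gamma> + chi * real N"

definition centers :: "nat \<Rightarrow> real \<Rightarrow> real \<Rightarrow> nat \<Rightarrow> (nat \<Rightarrow> int) set" where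
  "centers d \<gamma> chi N = {x \<in> torus N d. \<forall>i<d. Lval \<gamma> chi N \<le> real_of_int (x i)
                                        \<and> real_of_int (x i) \<le> real N - Lval \<gamma> chi N}"

definition Bset :: "nat \<Rightarrow> real \<Rightarrow> real \<Rightarrow> nat \<Rightarrow> (nat \<Rightarrow> int) set" where
  "Bset d \<gamma> chi N = (\<Union>x \<in> centers d \<gamma> chi N. tball N d x (chi * real N))"

definition Delta :: "nat \<Rightarrow> real \<Rightarrow> real \<Rightarrow> nat \<Rightarrow> (nat \<Rightarrow> int) set" where
  "Delta d \<gamma> chi N = torus N d - (\<Union>x \<in> Bset d \<gamma> chi N. tball N d x (real N powr \<gamma>))"

definition Gset :: "nat \<Rightarrow> real \<Rightarrow> real \<Rightarrow> nat \<Rightarrow> (nat \<Rightarrow> int) set" where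
  "Gset d \<gamma> chi N = {x \<in> Bset d \<gamma> chi N.
      tsetdist N d x (tbdry N d (Bset d \<gamma> chi N)) \<ge> chi * real N / 2}"

definition unit_steps :: "nat \<Rightarrow> (nat \<Rightarrow> int) set" where
  "unit_steps d = {(\<lambda>j. if j = i then s else 0) | i s. i < d \<and> (s = 1 \<or> s = -1)}"

definition walk_space :: "nat \<Rightarrow> (nat \<Rightarrow> nat \<Rightarrow> int) measure" where
  "walk_space d = PiM (UNIV::nat set) (\<lambda>_. measure_pmf (pmf_of_set (unit_steps d)))"

definition walk_pos :: "nat \<Rightarrow> (nat \<Rightarrow> int) \<Rightarrow> (nat \<Rightarrow> nat \<Rightarrow> int) \<Rightarrow> nat \<Rightarrow> (nat \<Rightarrow> int)" where
  "walk_pos N x \<omega> k = (\<lambda>i. (x i + (\<Sum>j<k. \<omega> j i)) mod int N)"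

definition hit_time :: "nat \<Rightarrow> (nat \<Rightarrow> int) \<Rightarrow> (nat \<Rightarrow> nat \<Rightarrow> int) \<Rightarrow> (nat \<Rightarrow> int) set \<Rightarrow> enat" where
  "hit_time N x \<omega> K = (if \<exists>k. walk_pos N x \<omega> k \<in> K
                         then enat (LEAST k. walk_pos N x \<omega> k \<in> K) else \<infinity>)"

definition hit_before_prob :: "nat \<Rightarrow> nat \<Rightarrow> (nat \<Rightarrow> int) \<Rightarrow> (nat \<Rightarrow> int) set \<Rightarrow> (nat \<Rightarrow> int) set \<Rightarrow> real" where
  "hit_before_prob N d x G D = measure (walk_space d)
     {\<omega> \<in> space (walk_space d). hit_time N x \<omega> G < hit_time N x \<omega> D}"

end

theory Submission
  imports Defs
begin
lemma space_walk[simp]: "space (walk_space d) = UNIV"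
  by (simp add: walk_space_def space_PiM)

lemma unit_steps_ne: "d > 0 \<Longrightarrow> unit_steps d \<noteq> {}"
  unfolding unit_steps_def by blast

definition ev :: "nat \<Rightarrow> int \<Rightarrow> nat \<Rightarrow> int" where
  "ev i s = (\<lambda>j. if j = i then s else 0)"

lemma unit_steps_img: "unit_steps d = (\<lambda>(i,s). ev i s) ` ({..<d} \<times> {1,-1})"
  unfolding unit_steps_def ev_def by auto

lemma ev_inj: "inj_on (\<lambda>(i,s). ev i s) ({..<d} \<times> {1,-1})"
proof (rule inj_onI, clarify)
  fix i s i' s' assume h: "ev i s = ev i' s'" "s \<in> {1,-1::int}" "s' \<in> {1,-1::int}"
  then have "ev i s i = ev i' s' i" by simp
  with h(2,3) have "i = i'" unfolding ev_def by (auto split: if_splits)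
  moreover from h have "ev i s i' = ev i' s' i'" by simp
  ultimately show "i = i' \<and> s = s'" unfolding ev_def by simp
qed

lemma finite_unit_steps: "finite (unit_steps d)"
  unfolding unit_steps_img by simp

lemma card_unit_steps: "card (unit_steps d) = 2 * d"
  unfolding unit_steps_img by (subst card_image[OF ev_inj]) (simp add: card_cartesian_product)

lemma sum_unit_steps:
  "(\<Sum>e\<in>unit_steps d. h e) = (\<Sum>i<d. h (ev i 1) + h (ev i (-1)))"
  unfolding unit_steps_img
  by (subst sum.reindex[OF ev_inj]) (simp add: sum.cartesian_product')

lemma prob_space_walk: "prob_space (walk_space d)"
  unfolding walk_space_def by (rule prob_space_PiM) (rule prob_space_measure_pmf)

lemma coord_meas: "(\<lambda>\<omega>. \<omega> j i) \<in> measurable (walk_space d) (count_space UNIV)"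
proof -
  have "(\<lambda>\<omega>. \<omega> j) \<in> measurable (walk_space d) (measure_pmf (pmf_of_set (unit_steps d)))"
    unfolding walk_space_def by (rule measurable_component_singleton) simp
  then have "(\<lambda>\<omega>. \<omega> j) \<in> measurable (walk_space d) (count_space UNIV)" by simp
  then show ?thesis by (rule measurable_compose) simp
qed

lemma int_op_meas:
  fixes f g :: "_ \<Rightarrow> int"
  assumes "f \<in> measurable M (count_space UNIV)" "g \<in> measurable M (count_space UNIV)"
  shows "(\<lambda>\<omega>. F (f \<omega>) (g \<omega>) :: int) \<in> measurable M (count_space UNIV)"
proof -
  have "(\<lambda>\<omega>. (\<lambda>a. F a (g \<omega>)) (f \<omega>)) \<in> measurable M (count_space UNIV)"
  proof (rule measurable_compose_countable[where f="\<lambda>a \<omega>. F a (g \<omega>)", OF _ assms(1)])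
    fix a :: int
    show "(\<lambda>\<omega>. F a (g \<omega>)) \<in> measurable M (count_space UNIV)"
      by (rule measurable_compose_countable[where f="\<lambda>b \<omega>. F a b", OF _ assms(2)]) simp
  qed
  then show ?thesis by simp
qed

lemma walk_coord_meas:
  "(\<lambda>\<omega>. walk_pos N y \<omega> k i) \<in> measurable (walk_space d) (count_space UNIV)"
proof -
  have "(\<lambda>\<omega>. (\<Sum>j<k. \<omega> j i)) \<in> measurable (walk_space d) (count_space UNIV)"
  proof (induction k)
    case 0 then show ?case by simp
  next
    case (Suc k)
    have "(\<lambda>\<omega>. (\<lambda>a b. a + b) (\<Sum>j<k. \<omega> j i) (\<omega> k i)) \<in> measurable (walk_space d) (count_space UNIV)"
      by (rule int_op_meas[OF Suc coord_meas])
    then show ?case by simp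
  qed
  then have "(\<lambda>\<omega>. (\<lambda>a b. (y i + a) mod int N) (\<Sum>j<k. \<omega> j i) (0::int)) \<in> measurable (walk_space d) (count_space UNIV)"
    by (rule int_op_meas) simp
  then show ?thesis unfolding walk_pos_def by simp
qed

lemma walk_pt_meas:
  "{\<omega>. walk_pos N y \<omega> k = g} \<in> sets (walk_space d)"
proof -
  have "{\<omega>. walk_pos N y \<omega> k = g} = (\<Inter>i. {\<omega> \<in> space (walk_space d). walk_pos N y \<omega> k i = g i})"
    by (auto simp: fun_eq_iff)
  also have "\<dots> \<in> sets (walk_space d)"
  proof -
    have *: "{\<omega> \<in> space (walk_space d). walk_pos N y \<omega> k i = g i} \<in> sets (walk_space d)" for i
    proof -
    have "(\<lambda>\<omega>. walk_pos N y \<omega> k i) -` {g i} \<inter> space (walk_space d) \<in> sets (walk_space d)"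
      by (rule measurable_sets[OF walk_coord_meas]) simp
    then show ?thesis
      by (simp add: vimage_def Collect_conj_eq Int_def)
    qed
    show ?thesis using * by (intro sets.countable_INT) auto
  qed
  finally show ?thesis .
qed

lemma walk_set_meas:
  assumes "finite S"
  shows "{\<omega>. walk_pos N y \<omega> k \<in> S} \<in> sets (walk_space d)"
proof -
  have "{\<omega>. walk_pos N y \<omega> k \<in> S} = (\<Union>g\<in>S. {\<omega>. walk_pos N y \<omega> k = g})" by auto
  also have "\<dots> \<in> sets (walk_space d)" using assms walk_pt_meas by auto
  finally show ?thesis .
qed

lemma walk_split:
  assumes d: "d > 0" and A: "A \<in> sets (walk_space d)"
  shows "emeasure (walk_space d) A =
    (\<Sum>e\<in>unit_steps d. emeasure (walk_space d) {\<omega>. case_nat e \<omega> \<in> A}) / card (unit_steps d)"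
proof -
  define M where "M = measure_pmf (pmf_of_set (unit_steps d))"
  interpret S: sequence_space M unfolding M_def by unfold_locales
  interpret P: pair_sigma_finite M "\<Pi>\<^sub>M i::nat\<in>UNIV. M" by unfold_locales
  have W: "walk_space d = S.S" by (simp add: walk_space_def M_def)
  have fm: "(\<lambda>(s, \<omega>). case_nat s \<omega>) \<in> measurable (M \<Otimes>\<^sub>M S.S) S.S" by measurable
  have A': "A \<in> sets S.S" using A W by simp
  have "emeasure S.S A = emeasure (distr (M \<Otimes>\<^sub>M S.S) S.S (\<lambda>(s, \<omega>). case_nat s \<omega>)) A"
    by (simp add: S.PiM_iter)
  also have "\<dots> = emeasure (M \<Otimes>\<^sub>M S.S) ((\<lambda>(s, \<omega>). case_nat s \<omega>) -` A \<inter> space (M \<Otimes>\<^sub>M S.S))"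
    by (rule emeasure_distr[OF fm A'])
  also have "\<dots> = (\<integral>\<^sup>+x. emeasure S.S (Pair x -` ((\<lambda>(s, \<omega>). case_nat s \<omega>) -` A \<inter> space (M \<Otimes>\<^sub>M S.S))) \<partial>M)"
    by (rule S.emeasure_pair_measure_alt) (rule measurable_sets[OF fm A'])
  also have "\<dots> = (\<integral>\<^sup>+x. emeasure S.S {\<omega>. case_nat x \<omega> \<in> A} \<partial>M)"
    by (intro nn_integral_cong arg_cong[where f="emeasure S.S"])
       (auto simp: space_pair_measure M_def space_PiM)
  also have "\<dots> = (\<Sum>e\<in>unit_steps d. emeasure S.S {\<omega>. case_nat e \<omega> \<in> A}) / card (unit_steps d)"
    unfolding M_def
    by (rule nn_integral_pmf_of_set[OF unit_steps_ne[OF d] finite_unit_steps])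
  finally show ?thesis by (simp add: W)
qed

definition step :: "nat \<Rightarrow> (nat \<Rightarrow> int) \<Rightarrow> (nat \<Rightarrow> int) \<Rightarrow> (nat \<Rightarrow> int)" where
  "step N y e = (\<lambda>i. (y i + e i) mod int N)"

lemma walk_pos_Suc_case:
  "walk_pos N y (case_nat e \<omega>) (Suc k) = walk_pos N (step N y e) \<omega> k"
  unfolding walk_pos_def step_def sum.lessThan_Suc_shift
  by (simp add: mod_add_left_eq add.assoc)

lemma walk_pos_0: "y \<in> torus N d \<Longrightarrow> walk_pos N y \<omega> 0 = y"
proof (intro ext)
  fix i assume "y \<in> torus N d"
  then show "walk_pos N y \<omega> 0 i = y i"
    unfolding walk_pos_def torus_def by (cases "i < d") (auto simp: mod_pos_pos_trivial)
qed

lemma step_torus: "y \<in> torus N d \<Longrightarrow> e \<in> unit_steps d \<Longrightarrow> step N y e \<in> torus N d"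
  unfolding torus_def step_def unit_steps_def by auto

definition Ev :: "nat \<Rightarrow> (nat \<Rightarrow> int) set \<Rightarrow> (nat \<Rightarrow> int) set \<Rightarrow> nat \<Rightarrow> (nat \<Rightarrow> int) \<Rightarrow> (nat \<Rightarrow> nat \<Rightarrow> int) set" where
  "Ev N G A n y = {\<omega>. \<exists>k\<le>n. walk_pos N y \<omega> k \<in> G \<and> (\<forall>j<k. walk_pos N y \<omega> j \<in> A)}"

lemma UNIV_walk: "UNIV \<in> sets (walk_space d)"
  using sets.top[of "walk_space d"] by simp

lemma Ev_meas:
  assumes "finite G" "finite A"
  shows "Ev N G A n y \<in> sets (walk_space d)"
proof -
  have "Ev N G A n y = (\<Union>k\<in>{..n}. {\<omega>. walk_pos N y \<omega> k \<in> G} \<inter> (\<Inter>j\<in>{..<k}. {\<omega>. walk_pos N y \<omega> j \<in> A}))"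
    unfolding Ev_def by auto
  also have "\<dots> \<in> sets (walk_space d)"
    using walk_set_meas[OF assms(1)] walk_set_meas[OF assms(2)]
    by (intro sets.finite_UN sets.Int sets.countable_INT'') (auto simp: UNIV_walk)
  finally show ?thesis .
qed

lemma Ev_Suc:
  assumes "y \<in> torus N d" "y \<notin> G" "y \<in> A"
  shows "{\<omega>. case_nat e \<omega> \<in> Ev N G A (Suc n) y} = Ev N G A n (step N y e)"
proof (intro set_eqI iffI)
  fix \<omega> assume "\<omega> \<in> {\<omega>. case_nat e \<omega> \<in> Ev N G A (Suc n) y}"
  then obtain k where k: "k \<le> Suc n" "walk_pos N y (case_nat e \<omega>) k \<in> G"
    "\<forall>j<k. walk_pos N y (case_nat e \<omega>) j \<in> A" unfolding Ev_def by auto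
  then obtain k' where kk: "k = Suc k'" using assms walk_pos_0[OF assms(1)] by (cases k) auto
  show "\<omega> \<in> Ev N G A n (step N y e)" unfolding Ev_def
  proof (intro CollectI exI[of _ k'] conjI allI impI)
    show "k' \<le> n" using k kk by simp
    show "walk_pos N (step N y e) \<omega> k' \<in> G" using k(2) kk walk_pos_Suc_case by metis
    fix j assume "j < k'" then show "walk_pos N (step N y e) \<omega> j \<in> A"
      using k(3) kk walk_pos_Suc_case by (metis Suc_mono)
  qed
next
  fix \<omega> assume "\<omega> \<in> Ev N G A n (step N y e)"
  then obtain k where k: "k \<le> n" "walk_pos N (step N y e) \<omega> k \<in> G"
    "\<forall>j<k. walk_pos N (step N y e) \<omega> j \<in> A" unfolding Ev_def by auto
  show "\<omega> \<in> {\<omega>. case_nat e \<omega> \<in> Ev N G A (Suc n) y}" unfolding Ev_def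
  proof (intro CollectI exI[of _ "Suc k"] conjI allI impI)
    show "Suc k \<le> Suc n" using k by simp
    show "walk_pos N y (case_nat e \<omega>) (Suc k) \<in> G" using k(2) walk_pos_Suc_case by metis
    fix j assume j: "j < Suc k"
    show "walk_pos N y (case_nat e \<omega>) j \<in> A"
    proof (cases j)
      case 0 then show ?thesis using walk_pos_0[OF assms(1)] assms(3) by simp
    next
      case (Suc j') then show ?thesis using k(3) j walk_pos_Suc_case by (metis Suc_less_SucD)
    qed
  qed
qed

lemma Ev_rec:
  assumes d: "d > 0" and fin: "finite G" "finite A"
    and y: "y \<in> torus N d" "y \<notin> G" "y \<in> A"
  shows "measure (walk_space d) (Ev N G A (Suc n) y) =
     (\<Sum>e\<in>unit_steps d. measure (walk_space d) (Ev N G A n (step N y e))) / card (unit_steps d)"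
proof -
  interpret W: prob_space "walk_space d" by (rule prob_space_walk)
  have "ennreal (measure (walk_space d) (Ev N G A (Suc n) y)) = emeasure (walk_space d) (Ev N G A (Suc n) y)"
    by (simp add: W.emeasure_eq_measure)
  also have "\<dots> = (\<Sum>e\<in>unit_steps d. emeasure (walk_space d) (Ev N G A n (step N y e))) / card (unit_steps d)"
    by (subst walk_split[OF d Ev_meas[OF fin]]) (simp add: Ev_Suc[OF y])
  also have "\<dots> = ennreal ((\<Sum>e\<in>unit_steps d. measure (walk_space d) (Ev N G A n (step N y e))) / card (unit_steps d))"
    by (simp add: W.emeasure_eq_measure sum_ennreal divide_ennreal card_gt_0_iff ennreal_of_nat_eq_real_of_nat sum_nonneg finite_unit_steps unit_steps_ne[OF d])
  finally show ?thesis by (simp add: sum_nonneg)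
qed

lemma hit_lt_iff:
  "hit_time N x \<omega> G < hit_time N x \<omega> D \<longleftrightarrow>
   (\<exists>k. walk_pos N x \<omega> k \<in> G \<and> (\<forall>j\<le>k. walk_pos N x \<omega> j \<notin> D))"
proof
  assume h: "hit_time N x \<omega> G < hit_time N x \<omega> D"
  then have ex: "\<exists>k. walk_pos N x \<omega> k \<in> G" unfolding hit_time_def by (auto split: if_splits)
  define K where "K = (LEAST k. walk_pos N x \<omega> k \<in> G)"
  have K: "walk_pos N x \<omega> K \<in> G" unfolding K_def using ex by (rule LeastI_ex)
  have "\<forall>j\<le>K. walk_pos N x \<omega> j \<notin> D"
  proof (cases "\<exists>k. walk_pos N x \<omega> k \<in> D")
    case True
    then have "K < (LEAST k. walk_pos N x \<omega> k \<in> D)" using h ex unfolding hit_time_def K_def by auto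
    then show ?thesis using not_less_Least by (metis le_less_trans)
  next
    case False then show ?thesis by auto
  qed
  with K show "\<exists>k. walk_pos N x \<omega> k \<in> G \<and> (\<forall>j\<le>k. walk_pos N x \<omega> j \<notin> D)" by blast
next
  assume "\<exists>k. walk_pos N x \<omega> k \<in> G \<and> (\<forall>j\<le>k. walk_pos N x \<omega> j \<notin> D)"
  then obtain k where k: "walk_pos N x \<omega> k \<in> G" "\<forall>j\<le>k. walk_pos N x \<omega> j \<notin> D" by blast
  have l1: "(LEAST k. walk_pos N x \<omega> k \<in> G) \<le> k" using k(1) by (rule Least_le)
  show "hit_time N x \<omega> G < hit_time N x \<omega> D"
  proof (cases "\<exists>m. walk_pos N x \<omega> m \<in> D")
    case True
    have "k < (LEAST m. walk_pos N x \<omega> m \<in> D)"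
      using LeastI_ex[OF True] k(2) by (metis not_le)
    then show ?thesis using l1 True k(1) unfolding hit_time_def by auto
  next
    case False then show ?thesis using k(1) unfolding hit_time_def by auto
  qed
qed

lemma hit_meas:
  assumes "finite G" "finite D"
  shows "{\<omega> \<in> space (walk_space d). hit_time N x \<omega> G < hit_time N x \<omega> D} \<in> sets (walk_space d)"
proof -
  have "{\<omega> \<in> space (walk_space d). hit_time N x \<omega> G < hit_time N x \<omega> D} =
     (\<Union>k. {\<omega>. walk_pos N x \<omega> k \<in> G} \<inter> (\<Inter>j\<in>{..k}. UNIV - {\<omega>. walk_pos N x \<omega> j \<in> D}))"
    by (auto simp: hit_lt_iff)
  also have "\<dots> \<in> sets (walk_space d)"
    using walk_set_meas[OF assms(1)] walk_set_meas[OF assms(2)]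
    by (intro sets.countable_UN' sets.Int sets.countable_INT'' sets.Diff) (auto simp: UNIV_walk)
  finally show ?thesis .
qed

lemma Ev_sub_hit:
  assumes "G' \<subseteq> G" "G' \<subseteq> A" "A \<inter> D = {}"
  shows "Ev N G' A n x \<subseteq> {\<omega> \<in> space (walk_space d). hit_time N x \<omega> G < hit_time N x \<omega> D}"
proof
  fix \<omega> assume "\<omega> \<in> Ev N G' A n x"
  then obtain k where k: "walk_pos N x \<omega> k \<in> G'" "\<forall>j<k. walk_pos N x \<omega> j \<in> A"
    unfolding Ev_def by auto
  have "\<forall>j\<le>k. walk_pos N x \<omega> j \<notin> D"
    using k assms by (metis disjoint_iff le_neq_implies_less subsetD)
  with k(1) assms(1) show "\<omega> \<in> {\<omega> \<in> space (walk_space d). hit_time N x \<omega> G < hit_time N x \<omega> D}"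
    by (auto simp: hit_lt_iff)
qed

lemma finite_torus: "finite (torus N d)"
proof -
  have "torus N d \<subseteq> (\<lambda>f i. if i < d then f i else 0) ` (PiE {..<d} (\<lambda>_. {0..<int N}))"
  proof
    fix x assume x: "x \<in> torus N d"
    show "x \<in> (\<lambda>f i. if i < d then f i else 0) ` (PiE {..<d} (\<lambda>_. {0..<int N}))"
    proof (rule image_eqI[of _ _ "restrict x {..<d}"])
      show "x = (\<lambda>i. if i < d then restrict x {..<d} i else 0)"
        using x unfolding torus_def by (auto simp: fun_eq_iff)
      show "restrict x {..<d} \<in> PiE {..<d} (\<lambda>_. {0..<int N})" using x unfolding torus_def by auto
    qed
  qed
  moreover have "finite ((\<lambda>f i. if i < d then f i else 0) ` (PiE {..<d} (\<lambda>_. {0..<int N})))"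
    by (intro finite_imageI finite_PiE) auto
  ultimately show ?thesis by (rule finite_subset)
qed

lemma hit_ge_Ev:
  assumes "G' \<subseteq> G" "G' \<subseteq> A" "A \<inter> D = {}" "finite G'" "finite A" "finite G" "finite D"
  shows "measure (walk_space d) (Ev N G' A n x) \<le> hit_before_prob N d x G D"
  unfolding hit_before_prob_def
  by (rule finite_measure.finite_measure_mono[OF prob_space.finite_measure[OF prob_space_walk]
        Ev_sub_hit[OF assms(1-3)] hit_meas[OF assms(6,7)]])

lemma Ev_lower:
  fixes phi :: "(nat \<Rightarrow> int) \<Rightarrow> real"
  assumes d: "d > 0" and fin: "finite G" "finite A" and eps: "eps > 0"
    and le1: "\<And>y. y \<in> torus N d \<Longrightarrow> phi y \<le> 1"
    and out: "\<And>y. y \<in> torus N d \<Longrightarrow> y \<notin> A \<Longrightarrow> phi y \<le> 0"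
    and sub: "\<And>y. y \<in> torus N d \<Longrightarrow> y \<in> A \<Longrightarrow> y \<notin> G \<Longrightarrow>
        phi y + eps \<le> (\<Sum>e\<in>unit_steps d. phi (step N y e)) / card (unit_steps d)"
  shows "y \<in> torus N d \<Longrightarrow> phi y - max 0 (1 - real n * eps) \<le> measure (walk_space d) (Ev N G A n y)"
proof (induction n arbitrary: y)
  case 0
  have "0 \<le> measure (walk_space d) (Ev N G A 0 y)" by simp
  then show ?case using le1[OF 0] by linarith
next
  case (Suc n)
  interpret W: prob_space "walk_space d" by (rule prob_space_walk)
  have m0: "0 \<le> measure (walk_space d) (Ev N G A (Suc n) y)" by simp
  have mx: "0 \<le> max 0 (1 - real (Suc n) * eps)" by simp
  show ?case
  proof (cases "y \<in> G")
    case True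
    have "Ev N G A (Suc n) y = space (walk_space d)"
      unfolding Ev_def using True walk_pos_0[OF Suc.prems] by force
    then have "measure (walk_space d) (Ev N G A (Suc n) y) = 1" using W.prob_space by simp
    then show ?thesis using le1[OF Suc.prems] mx by linarith
  next
    case nG: False
    show ?thesis
    proof (cases "y \<in> A")
      case False
      then show ?thesis using out[OF Suc.prems False] m0 mx by linarith
    next
      case True
      define a where "a = max 0 (1 - real n * eps)"
      have cpos: "card (unit_steps d) > 0"
        using card_gt_0_iff finite_unit_steps unit_steps_ne[OF d] by blast
      have "(\<Sum>e\<in>unit_steps d. phi (step N y e) - a) \<le>
            (\<Sum>e\<in>unit_steps d. measure (walk_space d) (Ev N G A n (step N y e)))"
        by (intro sum_mono) (use Suc.IH[OF step_torus[OF Suc.prems]] in \<open>simp add: a_def\<close>)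
      from this have "(\<Sum>e\<in>unit_steps d. phi (step N y e)) / card (unit_steps d) - a \<le>
            (\<Sum>e\<in>unit_steps d. measure (walk_space d) (Ev N G A n (step N y e))) / card (unit_steps d)"
      proof -
        let ?C = "real (card (unit_steps d))"
        let ?S1 = "(\<Sum>e\<in>unit_steps d. phi (step N y e))"
        let ?S2 = "(\<Sum>e\<in>unit_steps d. measure (walk_space d) (Ev N G A n (step N y e)))"
        assume h: "(\<Sum>e\<in>unit_steps d. phi (step N y e) - a) \<le> ?S2"
        have "?S1 - a * ?C \<le> ?S2" using h by (simp add: sum_subtractf mult.commute)
        then have "(?S1 - a * ?C) / ?C \<le> ?S2 / ?C" by (rule divide_right_mono) simp
        also have "(?S1 - a * ?C) / ?C = ?S1 / ?C - a" using cpos by (simp add: diff_divide_distrib)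
        finally show ?thesis .
      qed
      moreover have "phi y - max 0 (1 - real (Suc n) * eps) \<le> phi y + eps - a"
        unfolding a_def using eps by (auto simp: max_def algebra_simps)
      ultimately show ?thesis
        using sub[OF Suc.prems True nG] Ev_rec[OF d fin Suc.prems nG True, of n] by linarith
    qed
  qed
qed

definition cd :: "nat \<Rightarrow> int \<Rightarrow> int" where
  "cd N t = min \<bar>t\<bar> (int N - \<bar>t\<bar>)"

definition sq :: "nat \<Rightarrow> (nat \<Rightarrow> int) \<Rightarrow> (nat \<Rightarrow> int) \<Rightarrow> real" where
  "sq d c y = (\<Sum>i<d. (real_of_int (y i - c i))\<^sup>2)"

lemma tdist_L2: "tdist N d x y = L2_set (\<lambda>i. real_of_int (cd N (x i - y i))) {..<d}"
  unfolding tdist_def L2_set_def cd_def by simp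

lemma cd_bounds:
  assumes "x \<in> torus N d" "y \<in> torus N d" "i < d"
  shows "0 \<le> cd N (x i - y i)" "cd N (x i - y i) \<le> \<bar>x i - y i\<bar>"
proof -
  have "0 \<le> x i" "x i < int N" "0 \<le> y i" "y i < int N" using assms by (auto simp: torus_def)
  then show "0 \<le> cd N (x i - y i)" "cd N (x i - y i) \<le> \<bar>x i - y i\<bar>"
    by (auto simp: cd_def min_def abs_if)
qed

lemma tdist_le_plain:
  assumes "x \<in> torus N d" "y \<in> torus N d"
  shows "tdist N d x y \<le> sqrt (sq d x y)"
proof -
  have "tdist N d x y \<le> L2_set (\<lambda>i. real_of_int \<bar>y i - x i\<bar>) {..<d}"
    unfolding tdist_L2
  proof (intro L2_set_mono)
    fix i assume i: "i \<in> {..<d}"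
    have "cd N (x i - y i) \<le> \<bar>y i - x i\<bar>" using cd_bounds(2)[OF assms, of i] i by (simp add: abs_minus_commute)
    then show "real_of_int (cd N (x i - y i)) \<le> real_of_int \<bar>y i - x i\<bar>" by (simp only: of_int_le_iff)
    show "0 \<le> real_of_int (cd N (x i - y i))" using cd_bounds(1)[OF assms, of i] i by simp
  qed
  also have "\<dots> = sqrt (sq d x y)" unfolding L2_set_def sq_def by simp
  finally show ?thesis .
qed

lemma cd_tri0:
  fixes a b c N :: int
  assumes "0 \<le> a" "a < N" "0 \<le> b" "b < N" "0 \<le> c" "c < N"
  shows "min \<bar>a - c\<bar> (N - \<bar>a - c\<bar>) \<le> min \<bar>a - b\<bar> (N - \<bar>a - b\<bar>) + min \<bar>b - c\<bar> (N - \<bar>b - c\<bar>)"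
proof (cases "a \<le> b")
  case True
  then show ?thesis
  proof (cases "b \<le> c")
    case True then show ?thesis using assms \<open>a\<le>b\<close> by (simp add: min_def abs_if)
  next
    case False then show ?thesis using assms \<open>a\<le>b\<close> by (simp add: min_def abs_if)
  qed
next
  case False
  then show ?thesis
  proof (cases "b \<le> c")
    case True then show ?thesis using assms \<open>\<not>a\<le>b\<close> by (simp add: min_def abs_if)
  next
    case False then show ?thesis using assms \<open>\<not>a\<le>b\<close> by (simp add: min_def abs_if)
  qed
qed

lemma cd_tri:
  assumes "0 \<le> a" "a < int N" "0 \<le> b" "b < int N" "0 \<le> c" "c < int N"
  shows "cd N (a - c) \<le> cd N (a - b) + cd N (b - c)"
  unfolding cd_def by (rule cd_tri0[OF assms])

lemma tdist_tri:
  assumes "x \<in> torus N d" "y \<in> torus N d" "z \<in> torus N d"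
  shows "tdist N d x z \<le> tdist N d x y + tdist N d y z"
proof -
  have "tdist N d x z \<le> L2_set (\<lambda>i. real_of_int (cd N (x i - y i)) + real_of_int (cd N (y i - z i))) {..<d}"
    unfolding tdist_L2
  proof (intro L2_set_mono)
    fix i assume i: "i \<in> {..<d}"
    show "0 \<le> real_of_int (cd N (x i - z i))" using cd_bounds[OF assms(1,3)] i by simp
    show "real_of_int (cd N (x i - z i)) \<le> real_of_int (cd N (x i - y i)) + real_of_int (cd N (y i - z i))"
    proof -
      have "cd N (x i - z i) \<le> cd N (x i - y i) + cd N (y i - z i)"
        by (rule cd_tri) (use assms i in \<open>auto simp: torus_def\<close>)
      then show ?thesis by (simp only: of_int_le_iff of_int_add[symmetric])
    qed
  qed
  also have "\<dots> \<le> tdist N d x y + tdist N d y z"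
    unfolding tdist_L2 by (rule L2_set_triangle_ineq)
  finally show ?thesis .
qed

lemma tdist_sym: "tdist N d x y = tdist N d y x"
  unfolding tdist_def by (simp add: abs_minus_commute)

lemma tdist_self: "tdist N d x x = 0"
  unfolding tdist_def by simp

lemma coord_le_L2:
  assumes "i \<in> K" "finite K"
  shows "\<bar>f i\<bar> \<le> L2_set f K"
proof -
  have "(f i)\<^sup>2 \<le> (\<Sum>j\<in>K. (f j)\<^sup>2)"
    using assms by (intro member_le_sum) auto
  then have "sqrt ((f i)\<^sup>2) \<le> L2_set f K" unfolding L2_set_def by (rule real_sqrt_le_mono)
  then show ?thesis by simp
qed

lemma tdist_eq_plain:
  assumes c: "c \<in> torus N d" "\<And>i. i < d \<Longrightarrow> L \<le> real_of_int (c i) \<and> real_of_int (c i) \<le> real N - L"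
    and x: "x \<in> torus N d" and R: "R < L" and t: "tdist N d c x \<le> R"
  shows "sq d c x \<le> R\<^sup>2"
proof -
  have eq: "cd N (c i - x i) = \<bar>x i - c i\<bar>" if i: "i < d" for i
  proof -
    have "\<bar>real_of_int (cd N (c i - x i))\<bar> \<le> tdist N d c x"
      unfolding tdist_L2 by (rule coord_le_L2) (use i in auto)
    then have "real_of_int (cd N (c i - x i)) \<le> R" using t by linarith
    moreover have "0 \<le> x i" "x i < int N" using x i unfolding torus_def by auto
    moreover have "L \<le> real_of_int (c i)" "real_of_int (c i) \<le> real N - L" using c(2)[OF i] by auto
    ultimately show ?thesis using R unfolding cd_def min_def
      by (auto split: if_splits simp: abs_if)
  qed
  have "tdist N d c x = sqrt (\<Sum>i<d. (real_of_int (cd N (c i - x i)))\<^sup>2)"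
    unfolding tdist_def cd_def by simp
  also have "\<dots> = sqrt (sq d c x)" unfolding sq_def
    by (intro arg_cong[where f=sqrt] sum.cong) (auto simp: eq)
  finally have "tdist N d c x = sqrt (sq d c x)" .
  with t have "sqrt (sq d c x) \<le> R" by simp
  moreover have "0 \<le> sq d c x" unfolding sq_def by (simp add: sum_nonneg)
  ultimately show ?thesis
    by (metis real_sqrt_ge_zero real_sqrt_pow2 power_mono)
qed

lemma exp_pair_aux: "0 \<le> (q::real) \<Longrightarrow> 2 + q\<^sup>2 / 2 \<le> exp q + exp (- q)"
  using exp_lower_Taylor_quadratic[of q] exp_ge_add_one_self[of "-q"] by linarith

lemma exp_pair: "exp (p::real) * (2 + q\<^sup>2 / 2) \<le> exp (p + q) + exp (p - q)"
proof -
  have "2 + q\<^sup>2 / 2 \<le> exp q + exp (- q)"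
  proof (cases "0 \<le> q")
    case True then show ?thesis by (rule exp_pair_aux)
  next
    case False then show ?thesis using exp_pair_aux[of "-q"] by simp
  qed
  then have "exp p * (2 + q\<^sup>2 / 2) \<le> exp p * (exp q + exp (- q))"
    by (intro mult_left_mono) auto
  also have "\<dots> = exp (p + q) + exp (p - q)" by (simp add: exp_add exp_diff distrib_left exp_minus field_simps)
  finally show ?thesis .
qed

lemma sum_if_one:
  fixes b :: "nat \<Rightarrow> real"
  assumes "i < d"
  shows "(\<Sum>j<d. if j = i then a else b j) = (\<Sum>j<d. b j) + (a - b i)"
proof -
  have "(\<Sum>j<d. if j = i then a else b j) = a + (\<Sum>j\<in>{..<d} - {i}. b j)"
    using assms by (subst sum.remove[of _ i]) auto
  also have "(\<Sum>j<d. b j) = b i + (\<Sum>j\<in>{..<d} - {i}. b j)"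
    using assms by (subst sum.remove[of _ i]) auto
  ultimately show ?thesis by simp
qed

lemma step_ev:
  assumes y: "y \<in> torus N d" and i: "i < d" and s: "s \<in> {1,-1}"
    and b: "1 \<le> y i" "y i \<le> int N - 2"
  shows "step N y (ev i s) = (\<lambda>j. if j = i then y i + s else y j)"
proof (intro ext)
  fix j
  show "step N y (ev i s) j = (if j = i then y i + s else y j)"
  proof (cases "j = i")
    case True then show ?thesis using b s by (auto simp: step_def ev_def mod_pos_pos_trivial)
  next
    case False
    have "y j mod int N = y j"
      using y unfolding torus_def by (cases "j < d") (auto simp: mod_pos_pos_trivial)
    then show ?thesis using False by (simp add: step_def ev_def)
  qed
qed

lemma sq_step:
  assumes y: "y \<in> torus N d" and i: "i < d" and s: "s \<in> {1,-1}"
    and b: "1 \<le> y i" "y i \<le> int N - 2"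
  shows "sq d c (step N y (ev i s)) = sq d c y + 2 * real_of_int s * real_of_int (y i - c i) + 1"
proof -
  have "sq d c (step N y (ev i s)) = (\<Sum>j<d. if j = i then (real_of_int (y i + s - c i))\<^sup>2 else (real_of_int (y j - c j))\<^sup>2)"
    unfolding sq_def step_ev[OF assms] by (intro sum.cong) auto
  also have "\<dots> = sq d c y + ((real_of_int (y i + s - c i))\<^sup>2 - (real_of_int (y i - c i))\<^sup>2)"
    unfolding sq_def by (rule sum_if_one[OF i])
  also have "(real_of_int (y i + s - c i))\<^sup>2 - (real_of_int (y i - c i))\<^sup>2 = 2 * real_of_int s * real_of_int (y i - c i) + 1"
    using s by (auto simp: power2_eq_square algebra_simps)
  finally show ?thesis by simp
qed

lemma sq_nonneg: "0 \<le> sq d c y" unfolding sq_def by (simp add: sum_nonneg)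

lemma avg_step:
  fixes mu :: real
  assumes d: "d > 0" and y: "y \<in> torus N d"
    and b: "\<And>i. i < d \<Longrightarrow> 1 \<le> y i \<and> y i \<le> int N - 2"
    and mu: "0 < mu" "mu \<le> 1/4" and big: "2 * real d \<le> mu * sq d c y"
    and R2: "sq d c y \<le> R2\<^sup>2"
  shows "exp (- mu * sq d c y) - exp (- mu * R2\<^sup>2) + exp (- mu * R2\<^sup>2) * (exp (- mu) * (1 + 2 * mu) - 1)
    \<le> (\<Sum>e\<in>unit_steps d. exp (- mu * sq d c (step N y e)) - exp (- mu * R2\<^sup>2)) / card (unit_steps d)"
proof -
  define s where "s = sq d c y"
  define K where "K = exp (- mu * R2\<^sup>2)"
  define a where "a i = real_of_int (y i - c i)" for i
  have sa: "s = (\<Sum>i<d. (a i)\<^sup>2)" unfolding s_def sq_def a_def by simp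
  have "(\<Sum>e\<in>unit_steps d. exp (- mu * sq d c (step N y e)) - K) =
        (\<Sum>i<d. (exp (- mu * (s + 1) + (- 2 * mu * a i)) + exp (- mu * (s + 1) - (- 2 * mu * a i))) - 2 * K)"
    unfolding sum_unit_steps
  proof (intro sum.cong refl)
    fix i assume i: "i \<in> {..<d}"
    have b1: "1 \<le> y i" "y i \<le> int N - 2" using b i by auto
    show "exp (- mu * sq d c (step N y (ev i 1))) - K + (exp (- mu * sq d c (step N y (ev i (- 1)))) - K) =
      exp (- mu * (s + 1) + - 2 * mu * a i) + exp (- mu * (s + 1) - - 2 * mu * a i) - 2 * K"
      using i by (simp add: sq_step[OF y _ _ b1] s_def a_def algebra_simps)
  qed
  also have "\<dots> \<ge> (\<Sum>i<d. exp (- mu * (s + 1)) * (2 + (- 2 * mu * a i)\<^sup>2 / 2) - 2 * K)"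
    by (intro sum_mono diff_right_mono exp_pair)
  moreover have "(\<Sum>i<d. exp (- mu * (s + 1)) * (2 + (- 2 * mu * a i)\<^sup>2 / 2) - 2 * K) =
      exp (- mu * (s + 1)) * (2 * d + 2 * mu\<^sup>2 * s) - 2 * d * K"
    by (simp add: sa sum_subtractf sum.distrib sum_distrib_left sum_distrib_right power_mult_distrib algebra_simps)
  ultimately have S: "exp (- mu * (s + 1)) * (2 * d + 2 * mu\<^sup>2 * s) - 2 * d * K \<le>
      (\<Sum>e\<in>unit_steps d. exp (- mu * sq d c (step N y e)) - K)" by linarith
  have "2 * mu\<^sup>2 * s \<ge> 4 * mu * d"
  proof -
    have "mu * (mu * s) \<ge> mu * (2 * d)" using big mu by (intro mult_left_mono) (auto simp: s_def)
    then show ?thesis by (simp add: power2_eq_square algebra_simps)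
  qed
  then have "exp (- mu * (s + 1)) * (2 * d + 2 * mu\<^sup>2 * s) \<ge> exp (- mu * (s + 1)) * (2 * d + 4 * mu * d)"
    by (intro mult_left_mono) auto
  moreover have "exp (- mu * (s + 1)) * (2 * d + 4 * mu * d) = 2 * d * (exp (- mu * s) * (exp (- mu) * (1 + 2 * mu)))"
    by (simp add: algebra_simps exp_add[symmetric])
  ultimately have S2: "2 * d * (exp (- mu * s) * (exp (- mu) * (1 + 2 * mu))) - 2 * d * K \<le>
      (\<Sum>e\<in>unit_steps d. exp (- mu * sq d c (step N y e)) - K)" using S by linarith
  have del: "exp (- mu) * (1 + 2 * mu) - 1 \<ge> 0"
  proof -
    have "1 - mu \<le> exp (- mu)" using exp_ge_add_one_self[of "-mu"] by simp
    then have "(1 - mu) * (1 + 2 * mu) \<le> exp (- mu) * (1 + 2 * mu)" using mu by (intro mult_right_mono) auto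
    moreover have "1 \<le> (1 - mu) * (1 + 2 * mu)"
    proof -
      have "0 \<le> mu * (1 - 2 * mu)" using mu by (intro mult_nonneg_nonneg) auto
      then show ?thesis by (simp add: algebra_simps)
    qed
    ultimately show ?thesis by linarith
  qed
  have Ks: "K \<le> exp (- mu * s)" unfolding K_def s_def using R2 mu by simp
  have "exp (- mu * s) - K + K * (exp (- mu) * (1 + 2 * mu) - 1) \<le>
        exp (- mu * s) * (exp (- mu) * (1 + 2 * mu)) - K"
  proof -
    have "K * (exp (- mu) * (1 + 2 * mu) - 1) \<le> exp (- mu * s) * (exp (- mu) * (1 + 2 * mu) - 1)"
      using Ks del by (intro mult_right_mono) auto
    then show ?thesis by (simp add: algebra_simps)
  qed
  also have "\<dots> \<le> (\<Sum>e\<in>unit_steps d. exp (- mu * sq d c (step N y e)) - K) / (2 * d)"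
    using S2 d by (simp add: field_simps)
  finally show ?thesis unfolding card_unit_steps s_def K_def by simp
qed

lemma round_coord:
  fixes a :: int and t :: real
  assumes t: "0 \<le> t" "t \<le> 1"
  defines "w \<equiv> (if 0 \<le> a then \<lfloor>t * real_of_int \<bar>a\<bar>\<rfloor> else - \<lfloor>t * real_of_int \<bar>a\<bar>\<rfloor>)"
  shows "(real_of_int w)\<^sup>2 \<le> t\<^sup>2 * (real_of_int a)\<^sup>2"
    and "(real_of_int (a - w))\<^sup>2 \<le> 2 * (1 - t)\<^sup>2 * (real_of_int a)\<^sup>2 + 2"
    and "\<bar>w\<bar> \<le> \<bar>a\<bar>"
proof -
  define f where "f = \<lfloor>t * real_of_int \<bar>a\<bar>\<rfloor>"
  define A where "A = real_of_int \<bar>a\<bar>"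
  have A0: "0 \<le> A" unfolding A_def by simp
  have f0: "0 \<le> f" unfolding f_def using t by simp
  have f1: "real_of_int f \<le> t * A" unfolding f_def A_def by simp
  have f2: "t * A - 1 < real_of_int f" unfolding f_def A_def by linarith
  have tA: "t * A \<le> A" using t A0 by (simp add: mult_left_le_one_le)
  have wabs: "\<bar>real_of_int w\<bar> = real_of_int f" unfolding w_def f_def using f0 f_def by auto
  have "(real_of_int w)\<^sup>2 = (real_of_int f)\<^sup>2" using wabs by (metis power2_abs)
  also have "\<dots> \<le> (t * A)\<^sup>2" using f0 f1 by (intro power_mono) auto
  also have "\<dots> = t\<^sup>2 * (real_of_int a)\<^sup>2" unfolding A_def by (simp add: power_mult_distrib)
  finally show "(real_of_int w)\<^sup>2 \<le> t\<^sup>2 * (real_of_int a)\<^sup>2" .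
  have fa: "f \<le> \<bar>a\<bar>"
  proof -
    have "real_of_int f \<le> real_of_int \<bar>a\<bar>" using f1 tA unfolding A_def by linarith
    then show ?thesis by (simp only: of_int_le_iff)
  qed
  have wf: "w = (if 0 \<le> a then f else - f)" by (simp add: w_def f_def)
  have "\<bar>a - w\<bar> = \<bar>a\<bar> - f" using wf f0 fa by (auto simp: abs_if)
  then have aw: "\<bar>real_of_int (a - w)\<bar> = A - real_of_int f"
    unfolding A_def by (metis of_int_abs of_int_diff)
  have "(real_of_int (a - w))\<^sup>2 = (A - real_of_int f)\<^sup>2" using aw by (metis power2_abs)
  also have "\<dots> \<le> ((1 - t) * A + 1)\<^sup>2"
    using f1 f2 tA by (intro power_mono) (auto simp: algebra_simps)
  also have "\<dots> \<le> 2 * ((1 - t) * A)\<^sup>2 + 2"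
    using sum_squares_bound[of "(1-t)*A" 1] by (simp add: power2_eq_square algebra_simps)
  also have "\<dots> = 2 * (1 - t)\<^sup>2 * (real_of_int a)\<^sup>2 + 2"
    unfolding A_def by (simp add: power_mult_distrib)
  finally show "(real_of_int (a - w))\<^sup>2 \<le> 2 * (1 - t)\<^sup>2 * (real_of_int a)\<^sup>2 + 2" .
  show "\<bar>w\<bar> \<le> \<bar>a\<bar>" using wf f0 fa by auto
qed

lemma round_pt:
  assumes c: "c \<in> torus N d" "\<And>i. i < d \<Longrightarrow> L \<le> real_of_int (c i) \<and> real_of_int (c i) \<le> real N - L"
    and y: "y \<in> torus N d" and R: "0 < R" "R < sqrt (sq d c y)"
    and R2: "sq d c y \<le> R2\<^sup>2" "0 \<le> R2" "R2 < L" "R2 - R \<le> P / 2"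
    and P: "4 * real d \<le> P\<^sup>2"
  shows "\<exists>z\<in>torus N d. sq d c z \<le> R\<^sup>2 \<and> sq d z y \<le> P\<^sup>2"
proof -
  define r where "r = sqrt (sq d c y)"
  define t where "t = R / r"
  have r0: "0 < r" using R r_def by linarith
  have t01: "0 \<le> t" "t \<le> 1" using R r0 unfolding t_def r_def by auto
  have rsq: "r\<^sup>2 = sq d c y" unfolding r_def using sq_nonneg by simp
  define w where "w i = (if 0 \<le> y i - c i then \<lfloor>t * real_of_int \<bar>y i - c i\<bar>\<rfloor> else - \<lfloor>t * real_of_int \<bar>y i - c i\<bar>\<rfloor>)" for i
  define z where "z i = (if i < d then c i + w i else 0)" for i
  note rc = round_coord[OF t01, of "y i - c i" for i, folded w_def]
  have ai: "(real_of_int (y i - c i))\<^sup>2 \<le> R2\<^sup>2" if "i < d" for i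
  proof -
    have "(real_of_int (y i - c i))\<^sup>2 \<le> sq d c y" unfolding sq_def
      using that by (intro member_le_sum) auto
    then show ?thesis using R2 by linarith
  qed
  have z: "z \<in> torus N d"
    unfolding torus_def
  proof (intro CollectI conjI allI impI)
    fix i assume i: "i < d"
    have "\<bar>real_of_int (y i - c i)\<bar> \<le> R2" using ai[OF i] R2(2) by (metis abs_le_square_iff abs_of_nonneg)
    then have "\<bar>real_of_int (w i)\<bar> \<le> R2" using rc(3)[of i] by (metis of_int_abs of_int_le_iff order_trans)
    moreover have "L \<le> real_of_int (c i)" "real_of_int (c i) \<le> real N - L" using c(2)[OF i] by auto
    ultimately have "0 \<le> real_of_int (c i + w i)" "real_of_int (c i + w i) < real N" using R2 by auto
    then show "0 \<le> z i" "z i < int N" unfolding z_def using i by auto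
  next
    fix i :: nat assume "d \<le> i" then show "z i = 0" unfolding z_def by simp
  qed
  have "sq d c z = (\<Sum>i<d. (real_of_int (w i))\<^sup>2)" unfolding sq_def z_def by simp
  also have "\<dots> \<le> (\<Sum>i<d. t\<^sup>2 * (real_of_int (y i - c i))\<^sup>2)" by (intro sum_mono rc(1))
  also have "\<dots> = t\<^sup>2 * r\<^sup>2" unfolding rsq sq_def by (simp add: sum_distrib_left)
  also have "\<dots> = R\<^sup>2" unfolding t_def using r0 by (simp add: power_divide)
  finally have s1: "sq d c z \<le> R\<^sup>2" .
  have "sq d z y = (\<Sum>i<d. (real_of_int ((y i - c i) - w i))\<^sup>2)" unfolding sq_def z_def
    by (intro sum.cong) (auto simp: algebra_simps)
  also have "\<dots> \<le> (\<Sum>i<d. 2 * (1 - t)\<^sup>2 * (real_of_int (y i - c i))\<^sup>2 + 2)" by (intro sum_mono rc(2))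
  also have "\<dots> = 2 * (1 - t)\<^sup>2 * r\<^sup>2 + 2 * real d" unfolding rsq sq_def by (simp add: sum.distrib sum_distrib_left)
  also have "2 * (1 - t)\<^sup>2 * r\<^sup>2 = 2 * (r - R)\<^sup>2" unfolding t_def using r0
    by (simp add: power2_eq_square field_simps)
  also have "2 * (r - R)\<^sup>2 + 2 * real d \<le> P\<^sup>2"
  proof -
    have "r \<le> R2" unfolding r_def using R2(1,2) by (metis real_sqrt_le_iff real_sqrt_abs abs_of_nonneg)
    then have "0 \<le> r - R" "r - R \<le> P / 2" using R R2 r_def by auto
    then have "(r - R)\<^sup>2 \<le> (P / 2)\<^sup>2" by (intro power_mono) auto
    then show ?thesis using P by (simp add: power_divide)
  qed
  finally show ?thesis using s1 z by blast
qed

lemma ge_powr_thr: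
  fixes g K x :: real
  assumes "0 < g" "0 < K" "K powr (1/g) \<le> x"
  shows "K \<le> x powr g"
proof -
  have "(K powr (1/g)) powr g \<le> x powr g" by (rule powr_mono2) (use assms in auto)
  then show ?thesis using assms by (simp add: powr_powr)
qed

lemma large_N:
  fixes \<gamma> chi :: real
  assumes g: "0 < \<gamma>" "\<gamma> < 1" and chi: "0 < chi" and d: "0 < d"
  shows "\<exists>N0. \<forall>N\<ge>N0. 2 \<le> real N powr \<gamma> \<and> 4 * real d \<le> (real N powr \<gamma>)\<^sup>2 \<and> 4 \<le> chi * real N
     \<and> 128 * real d \<le> (chi * real N)\<^sup>2 \<and> real N powr \<gamma> \<le> 2 * chi * real N \<and> 0 < N"
proof -
  define K1 where "K1 = max 2 (2 * sqrt (real d))"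
  define T1 where "T1 = K1 powr (1 / \<gamma>)"
  define T2 where "T2 = max 4 (sqrt (128 * real d)) / chi"
  define T3 where "T3 = (1 / (2 * chi)) powr (1 / (1 - \<gamma>))"
  define N0 where "N0 = nat \<lceil>max (max T1 T2) (max T3 1)\<rceil>"
  show ?thesis
  proof (intro exI[of _ N0] allI impI conjI)
    fix N assume N: "N0 \<le> N"
    have NN: "max (max T1 T2) (max T3 1) \<le> real N"
      using N unfolding N0_def by linarith
    then have n1: "T1 \<le> real N" "T2 \<le> real N" "T3 \<le> real N" "1 \<le> real N" by auto
    have K1p: "0 < K1" unfolding K1_def by simp
    have a: "K1 \<le> real N powr \<gamma>" using ge_powr_thr[OF g(1) K1p] n1(1) unfolding T1_def by simp
    then show "2 \<le> real N powr \<gamma>" unfolding K1_def by simp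
    have "2 * sqrt (real d) \<le> real N powr \<gamma>" using a unfolding K1_def by simp
    then have "(2 * sqrt (real d))\<^sup>2 \<le> (real N powr \<gamma>)\<^sup>2" by (intro power_mono) auto
    then show "4 * real d \<le> (real N powr \<gamma>)\<^sup>2" by (simp add: power_mult_distrib)
    have b: "max 4 (sqrt (128 * real d)) \<le> chi * real N"
      using n1(2) chi unfolding T2_def by (simp add: divide_le_eq mult.commute)
    then show "4 \<le> chi * real N" by simp
    have "sqrt (128 * real d) \<le> chi * real N" using b by simp
    then have "(sqrt (128 * real d))\<^sup>2 \<le> (chi * real N)\<^sup>2" by (intro power_mono) auto
    then show "128 * real d \<le> (chi * real N)\<^sup>2" by simp
    have Np: "0 < real N" using n1 by simp
    then show "0 < N" by simp
    have c: "1 / (2 * chi) \<le> real N powr (1 - \<gamma>)"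
      using ge_powr_thr[of "1 - \<gamma>" "1 / (2 * chi)"] g chi n1(3) unfolding T3_def by simp
    have e: "real N powr \<gamma> * real N powr (1 - \<gamma>) = real N"
      using Np by (simp add: powr_add[symmetric])
    have "real N powr \<gamma> * (1 / (2 * chi)) \<le> real N powr \<gamma> * real N powr (1 - \<gamma>)"
      using c by (intro mult_left_mono) auto
    then have "real N powr \<gamma> / (2 * chi) \<le> real N" using e by simp
    then show "real N powr \<gamma> \<le> 2 * chi * real N" using chi by (simp add: divide_le_eq mult.commute)
  qed
qed

lemma sqrt_le_sq: "0 \<le> R \<Longrightarrow> s \<le> R\<^sup>2 \<Longrightarrow> sqrt s \<le> R"
  using real_sqrt_le_mono[of s "R\<^sup>2"] by simp

lemma centers_info:
  assumes "c \<in> centers d \<gamma> chi N"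
  shows "c \<in> torus N d" "\<And>i. i < d \<Longrightarrow> Lval \<gamma> chi N \<le> real_of_int (c i) \<and> real_of_int (c i) \<le> real N - Lval \<gamma> chi N"
    "tball N d c (chi * real N) \<subseteq> Bset d \<gamma> chi N"
  using assms unfolding centers_def Bset_def by auto

lemma Bset_torus: "Bset d \<gamma> chi N \<subseteq> torus N d"
  unfolding Bset_def tball_def by auto

lemma Gp_sub_G:
  assumes c: "c \<in> centers d \<gamma> chi N" and x: "x \<in> tbdry N d (Bset d \<gamma> chi N)"
    and R4: "4 \<le> chi * real N"
  shows "{y \<in> torus N d. sq d c y \<le> (chi * real N / 4)\<^sup>2} \<subseteq> Gset d \<gamma> chi N"
proof
  fix y assume y: "y \<in> {y \<in> torus N d. sq d c y \<le> (chi * real N / 4)\<^sup>2}"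
  define R where "R = chi * real N"
  have yt: "y \<in> torus N d" and ys: "sq d c y \<le> (R/4)\<^sup>2" using y unfolding R_def by auto
  note ci = centers_info[OF c]
  have R0: "0 \<le> R" using R4 R_def by simp
  have cy: "tdist N d c y \<le> R / 4"
  proof -
    have "tdist N d c y \<le> sqrt (sq d c y)" by (rule tdist_le_plain[OF ci(1) yt])
    also have "\<dots> \<le> sqrt ((R/4)\<^sup>2)" using ys by (rule real_sqrt_le_mono)
    also have "\<dots> = R / 4" using R0 by simp
    finally show ?thesis .
  qed
  have yB: "y \<in> Bset d \<gamma> chi N"
    using ci(3) yt cy R0 unfolding tball_def R_def by auto
  have "chi * real N / 2 \<le> tsetdist N d y (tbdry N d (Bset d \<gamma> chi N))"
    unfolding tsetdist_def
  proof (rule cInf_greatest)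
    show "tdist N d y ` tbdry N d (Bset d \<gamma> chi N) \<noteq> {}" using x by auto
    fix v assume "v \<in> tdist N d y ` tbdry N d (Bset d \<gamma> chi N)"
    then obtain w where w: "w \<in> tbdry N d (Bset d \<gamma> chi N)" and v: "v = tdist N d y w" by auto
    from w obtain w' where w': "w' \<in> torus N d" "w' \<notin> Bset d \<gamma> chi N" "tdist N d w w' = 1"
      unfolding tbdry_def by auto
    have wt: "w \<in> torus N d" using w Bset_torus[of d \<gamma> chi N] unfolding tbdry_def by auto
    have "tdist N d c w' > R" using w' ci(3) unfolding tball_def R_def by force
    moreover have "tdist N d c w' \<le> tdist N d c y + tdist N d y w + tdist N d w w'"
      using tdist_tri[OF ci(1) yt wt] tdist_tri[OF ci(1) wt w'(1)] by linarith
    ultimately show "chi * real N / 2 \<le> v" using v cy w'(3) R4 R_def by linarith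
  qed
  with yB show "y \<in> Gset d \<gamma> chi N" unfolding Gset_def by auto
qed

lemma Ap_disj:
  assumes c: "c \<in> centers d \<gamma> chi N" and P4: "4 * real d \<le> (real N powr \<gamma>)\<^sup>2"
    and R0: "0 < chi * real N"
  shows "{y \<in> torus N d. sq d c y \<le> (chi * real N + real N powr \<gamma> / 2)\<^sup>2} \<inter> Delta d \<gamma> chi N = {}"
proof -
  define R where "R = chi * real N"
  define P where "P = real N powr \<gamma>"
  note ci = centers_info[OF c]
  have "real N \<noteq> 0"
  proof
    assume "real N = 0" then show False using R0 by simp
  qed
  then have P0: "0 < P" unfolding P_def by simp
  have L: "Lval \<gamma> chi N = 2 * P + R" unfolding Lval_def P_def R_def by simp
  have key: "\<exists>z\<in>Bset d \<gamma> chi N. y \<in> tball N d z P"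
    if y: "y \<in> torus N d" "sq d c y \<le> (R + P / 2)\<^sup>2" for y
  proof (cases "sq d c y \<le> R\<^sup>2")
    case True
    have "tdist N d c y \<le> sqrt (sq d c y)" by (rule tdist_le_plain[OF ci(1) y(1)])
    also have "\<dots> \<le> R" using True R0 R_def by (intro sqrt_le_sq) auto
    finally have "y \<in> Bset d \<gamma> chi N" using ci(3) y unfolding tball_def R_def by auto
    moreover have "y \<in> tball N d y P" using y P0 by (simp add: tball_def tdist_self)
    ultimately show ?thesis by blast
  next
    case False
    have Rs: "R < sqrt (sq d c y)" using False by (intro real_less_rsqrt) auto
    have A1: "0 < R" using R0 unfolding R_def by simp
    have A2: "0 \<le> R + P/2" using A1 P0 by simp
    have A3: "R + P/2 < Lval \<gamma> chi N" using L P0 by simp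
    have A4: "R + P/2 - R \<le> P/2" by simp
    have P4': "4 * real d \<le> P\<^sup>2" using P4 unfolding P_def .
    have "\<exists>z\<in>torus N d. sq d c z \<le> R\<^sup>2 \<and> sq d z y \<le> P\<^sup>2"
      by (rule round_pt[OF ci(1) ci(2) y(1) A1 Rs y(2) A2 A3 A4 P4'])
    then obtain z where z: "z \<in> torus N d" "sq d c z \<le> R\<^sup>2" "sq d z y \<le> P\<^sup>2" by blast
    have "tdist N d c z \<le> sqrt (sq d c z)" by (rule tdist_le_plain[OF ci(1) z(1)])
    also have "\<dots> \<le> R" using z(2) R0 R_def by (intro sqrt_le_sq) auto
    finally have "z \<in> Bset d \<gamma> chi N" using ci(3) z unfolding tball_def R_def by auto
    moreover have "tdist N d z y \<le> P"
    proof -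
      have "tdist N d z y \<le> sqrt (sq d z y)" by (rule tdist_le_plain[OF z(1) y(1)])
      also have "\<dots> \<le> P" using z(3) P0 by (intro sqrt_le_sq) auto
      finally show ?thesis .
    qed
    ultimately show ?thesis using y unfolding tball_def by blast
  qed
  have key2: "\<exists>z\<in>Bset d \<gamma> chi N. y \<in> tball N d z (real N powr \<gamma>)"
    if "y \<in> torus N d" "sq d c y \<le> (chi * real N + real N powr \<gamma> / 2)\<^sup>2" for y
    using key[of y] that unfolding R_def P_def by blast
  show ?thesis
    unfolding Delta_def using key2 by blast
qed

lemma del_pos:
  fixes mu :: real
  assumes "0 < mu" "mu \<le> 1/4"
  shows "0 < exp (- mu) * (1 + 2 * mu) - 1"
proof -
  have "1 - mu \<le> exp (- mu)" using exp_ge_add_one_self[of "-mu"] by simp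
  then have "(1 - mu) * (1 + 2 * mu) \<le> exp (- mu) * (1 + 2 * mu)" using assms by (intro mult_right_mono) auto
  moreover have "1 < (1 - mu) * (1 + 2 * mu)"
  proof -
    have "0 < mu * (1 - 2 * mu)" using assms by (intro mult_pos_pos) auto
    then show ?thesis by (simp add: algebra_simps)
  qed
  ultimately show ?thesis by linarith
qed

lemma phi_bound:
  fixes R P sx mu :: real
  assumes R: "0 < R" and P: "0 < P" "P \<le> 2 * R" and sx: "0 \<le> sx" "sx \<le> R\<^sup>2"
    and mu: "mu = 32 * real d / R\<^sup>2" and d: "0 < d"
  shows "exp (- 32 * real d) * (32 * real d * P / R) / (1 + 96 * real d) \<le> exp (- mu * sx) - exp (- mu * (R + P / 2)\<^sup>2)"
proof -
  have mu0: "0 < mu" using mu R d by simp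
  have muR: "mu * R\<^sup>2 = 32 * real d" using mu R by simp
  define T where "T = mu * (P * R + P\<^sup>2 / 4)"
  have T0: "0 \<le> T" unfolding T_def using mu0 P R by simp
  have "mu * sx \<le> mu * R\<^sup>2" using mu0 sx by (intro mult_left_mono) auto
  then have e1: "exp (- 32 * real d) \<le> exp (- mu * sx)"
    using muR by simp
  have e2: "exp (- mu * (R + P / 2)\<^sup>2) = exp (- 32 * real d) * exp (- T)"
  proof -
    have "- mu * (R + P / 2)\<^sup>2 = - (mu * R\<^sup>2) + - T" unfolding T_def by (simp add: power2_eq_square algebra_simps)
    then have h: "- mu * (R + P / 2)\<^sup>2 = - (32 * real d) + - T" using muR by simp
    show ?thesis unfolding h exp_add by simp
  qed
  have e3: "exp (- T) \<le> 1 / (1 + T)"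
  proof -
    have "1 + T \<le> exp T" by simp
    then show ?thesis using T0 by (simp add: exp_minus divide_simps)
  qed
  have Tlo: "32 * real d * P / R \<le> T"
  proof -
    have "32 * real d * P / R = mu * (P * R)" using mu R by (simp add: power2_eq_square field_simps)
    also have "\<dots> \<le> T" unfolding T_def using mu0 P by (intro mult_left_mono) auto
    finally show ?thesis .
  qed
  have Thi: "T \<le> 96 * real d"
  proof -
    have "P * R \<le> 2 * R\<^sup>2" using P R by (simp add: power2_eq_square mult_right_mono)
    moreover have "P\<^sup>2 / 4 \<le> R\<^sup>2"
    proof -
      have "P\<^sup>2 \<le> (2 * R)\<^sup>2" using P by (intro power_mono) auto
      then show ?thesis by (simp add: power_mult_distrib)
    qed
    ultimately have "T \<le> mu * (3 * R\<^sup>2)" unfolding T_def using mu0 by (intro mult_left_mono) auto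
    then show ?thesis using muR by simp
  qed
  have "32 * real d * P / R / (1 + 96 * real d) \<le> T / (1 + 96 * real d)"
    using Tlo d by (intro divide_right_mono) auto
  also have "\<dots> \<le> T / (1 + T)" using Thi T0 by (intro divide_left_mono) auto
  also have "\<dots> = 1 - 1 / (1 + T)" using T0 by (simp add: field_simps)
  also have "\<dots> \<le> 1 - exp (- T)" using e3 by simp
  finally have "exp (- 32 * real d) * (32 * real d * P / R / (1 + 96 * real d)) \<le> exp (- 32 * real d) * (1 - exp (- T))"
    by (intro mult_left_mono) auto
  also have "\<dots> \<le> exp (- mu * sx) - exp (- mu * (R + P / 2)\<^sup>2)"
    using e1 e2 by (simp add: algebra_simps)
  finally show ?thesis by simp
qed

theorem mainTheorem12:
  fixes d :: nat and \<gamma> chi :: real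
  assumes "d \<ge> 3"
    and "1 / (real d - 1) < \<gamma>" and "\<gamma> < 1"
    and "0 < chi" and "chi < 1 / 4"
  shows "\<exists>c1 > 0. \<exists>N0. \<forall>N \<ge> N0. \<forall>x \<in> tbdry N d (Bset d \<gamma> chi N).
           hit_before_prob N d x (Gset d \<gamma> chi N) (Delta d \<gamma> chi N) \<ge> c1 * real N powr (\<gamma> - 1)"
proof -
  have d0: "0 < d" using assms(1) by simp
  have g0: "0 < \<gamma>"
  proof -
    have "0 < 1 / (real d - 1)" using assms(1) by simp
    then show ?thesis using assms(2) by linarith
  qed
  obtain N0 where N0: "\<And>N. N \<ge> N0 \<Longrightarrow> 2 \<le> real N powr \<gamma> \<and> 4 * real d \<le> (real N powr \<gamma>)\<^sup>2 \<and> 4 \<le> chi * real N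
     \<and> 128 * real d \<le> (chi * real N)\<^sup>2 \<and> real N powr \<gamma> \<le> 2 * chi * real N \<and> 0 < N"
    using large_N[OF g0 assms(3) assms(4) d0] by blast
  define c1 where "c1 = exp (- 32 * real d) * (32 * real d / chi) / (1 + 96 * real d)"
  have c1: "0 < c1" unfolding c1_def using d0 assms(4) by simp
  show ?thesis
  proof (intro exI[of _ c1] conjI c1 exI[of _ N0] allI impI ballI)
    fix N x assume N: "N0 \<le> N" and x: "x \<in> tbdry N d (Bset d \<gamma> chi N)"
    define P where "P = real N powr \<gamma>"
    define R where "R = chi * real N"
    have P2: "2 \<le> P" and P4: "4 * real d \<le> P\<^sup>2" and R4: "4 \<le> R" and R128: "128 * real d \<le> R\<^sup>2"
      and PR: "P \<le> 2 * R" and Npos: "0 < N"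
      using N0[OF N] unfolding P_def R_def by auto
    have R0: "0 < R" using R4 by simp
    have L: "Lval \<gamma> chi N = 2 * P + R" unfolding Lval_def P_def R_def by simp
    from x have "x \<in> Bset d \<gamma> chi N" unfolding tbdry_def by auto
    then obtain c where c: "c \<in> centers d \<gamma> chi N" and xc: "x \<in> tball N d c R"
      unfolding Bset_def R_def by auto
    note ci = centers_info[OF c]
    have xt: "x \<in> torus N d" and txc: "tdist N d c x \<le> R" using xc unfolding tball_def by auto
    have RL: "R < Lval \<gamma> chi N" unfolding L using P2 by linarith
    have sx: "sq d c x \<le> R\<^sup>2"
      by (rule tdist_eq_plain[OF ci(1) ci(2) xt RL txc])
    define rho where "rho = R / 4"
    define mu where "mu = 2 * real d / rho\<^sup>2"
    define R2 where "R2 = R + P / 2"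
    define Gp where "Gp = {y \<in> torus N d. sq d c y \<le> rho\<^sup>2}"
    define Ap where "Ap = {y \<in> torus N d. sq d c y \<le> R2\<^sup>2}"
    define phi where "phi y = exp (- mu * sq d c y) - exp (- mu * R2\<^sup>2)" for y
    define eps where "eps = exp (- mu * R2\<^sup>2) * (exp (- mu) * (1 + 2 * mu) - 1)"
    have mu32: "mu = 32 * real d / R\<^sup>2" unfolding mu_def rho_def by (simp add: power_divide)
    have mu0: "0 < mu" unfolding mu32 using d0 R0 by simp
    have mu4: "mu \<le> 1/4" unfolding mu32 using R128 R0 by (simp add: divide_simps)
    have eps0: "0 < eps" unfolding eps_def using del_pos[OF mu0 mu4] by simp
    have finGp: "finite Gp" "finite Ap" unfolding Gp_def Ap_def
      by (auto intro: finite_subset[OF _ finite_torus])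
    have lower: "phi x - max 0 (1 - real n * eps) \<le> measure (walk_space d) (Ev N Gp Ap n x)" for n
    proof (rule Ev_lower[OF d0 finGp eps0 _ _ _ xt])
      fix y assume "y \<in> torus N d"
      have "exp (- mu * sq d c y) \<le> 1" using mu0 sq_nonneg[of d c y] by simp
      then show "phi y \<le> 1" unfolding phi_def by (smt (verit) exp_gt_zero)
    next
      fix y assume y: "y \<in> torus N d" "y \<notin> Ap"
      then have "R2\<^sup>2 < sq d c y" unfolding Ap_def by auto
      then have "exp (- mu * sq d c y) \<le> exp (- mu * R2\<^sup>2)" using mu0 by simp
      then show "phi y \<le> 0" unfolding phi_def by simp
    next
      fix y assume y: "y \<in> torus N d" "y \<in> Ap" "y \<notin> Gp"
      have s1: "sq d c y \<le> R2\<^sup>2" and s2: "rho\<^sup>2 < sq d c y" using y unfolding Ap_def Gp_def by auto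
      have b: "1 \<le> y i \<and> y i \<le> int N - 2" if i: "i < d" for i
      proof -
        have "(real_of_int (y i - c i))\<^sup>2 \<le> sq d c y" unfolding sq_def
          using i by (intro member_le_sum) auto
        then have "(real_of_int (y i - c i))\<^sup>2 \<le> R2\<^sup>2" using s1 by linarith
        then have "\<bar>real_of_int (y i - c i)\<bar> \<le> \<bar>R2\<bar>" by (simp only: abs_le_square_iff)
        moreover have "\<bar>R2\<bar> = R2" using R0 P2 unfolding R2_def by simp
        ultimately have "\<bar>real_of_int (y i - c i)\<bar> \<le> R2" by simp
        moreover have "Lval \<gamma> chi N \<le> real_of_int (c i)" "real_of_int (c i) \<le> real N - Lval \<gamma> chi N"
          using ci(2)[OF i] by auto
        ultimately have "1 \<le> real_of_int (y i)" "real_of_int (y i) \<le> real N - 2"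
          using L P2 unfolding R2_def by auto
        then show ?thesis by linarith
      qed
      have big: "2 * real d \<le> mu * sq d c y"
      proof -
        have "mu * rho\<^sup>2 \<le> mu * sq d c y" using s2 mu0 by simp
        moreover have "mu * rho\<^sup>2 = 2 * real d" unfolding mu_def rho_def using R0 by simp
        ultimately show ?thesis by simp
      qed
      show "phi y + eps \<le> (\<Sum>e\<in>unit_steps d. phi (step N y e)) / real (card (unit_steps d))"
        unfolding phi_def eps_def by (rule avg_step[OF d0 y(1) b mu0 mu4 big s1])
    qed
    define n where "n = nat \<lceil>1 / eps\<rceil>"
    have "1 \<le> real n * eps"
    proof -
      have "1 / eps \<le> real n" unfolding n_def by linarith
      then show ?thesis using eps0 by (simp add: divide_le_eq)
    qed
    then have ph: "phi x \<le> measure (walk_space d) (Ev N Gp Ap n x)" using lower[of n] by simp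
    have GpG: "Gp \<subseteq> Gset d \<gamma> chi N" unfolding Gp_def rho_def R_def
      by (rule Gp_sub_G[OF c x]) (use R4 R_def in simp)
    have GpA: "Gp \<subseteq> Ap" unfolding Gp_def Ap_def
    proof (intro subsetI CollectI conjI; elim CollectE conjE)
      fix y assume "y \<in> torus N d" "sq d c y \<le> rho\<^sup>2"
      moreover have "rho\<^sup>2 \<le> R2\<^sup>2" unfolding rho_def R2_def using R0 P2 by (intro power_mono) auto
      ultimately show "y \<in> torus N d" "sq d c y \<le> R2\<^sup>2" by auto
    qed
    have AD: "Ap \<inter> Delta d \<gamma> chi N = {}" unfolding Ap_def R2_def R_def P_def
      by (rule Ap_disj[OF c]) (use P4 R0 P_def R_def in auto)
    have finG: "finite (Gset d \<gamma> chi N)"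
      by (rule finite_subset[OF _ finite_torus[of N d]]) (use Bset_torus[of d \<gamma> chi N] in \<open>auto simp: Gset_def\<close>)
    have finD: "finite (Delta d \<gamma> chi N)"
      by (rule finite_subset[OF _ finite_torus[of N d]]) (auto simp: Delta_def)
    have hb: "measure (walk_space d) (Ev N Gp Ap n x) \<le> hit_before_prob N d x (Gset d \<gamma> chi N) (Delta d \<gamma> chi N)"
      by (rule hit_ge_Ev[OF GpG GpA AD finGp finG finD])
    have pb: "exp (- 32 * real d) * (32 * real d * P / R) / (1 + 96 * real d) \<le> phi x"
      unfolding phi_def R2_def
      by (rule phi_bound[OF R0 _ PR sq_nonneg sx mu32 d0]) (use P2 in simp)
    have "c1 * real N powr (\<gamma> - 1) = exp (- 32 * real d) * (32 * real d * P / R) / (1 + 96 * real d)"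
    proof -
      have "real N powr (\<gamma> - 1) = P / real N" unfolding P_def using Npos by (simp add: powr_diff)
      then show ?thesis unfolding c1_def R_def by (simp add: field_simps)
    qed
    then show "c1 * real N powr (\<gamma> - 1) \<le> hit_before_prob N d x (Gset d \<gamma> chi N) (Delta d \<gamma> chi N)"
      using pb ph hb by linarith
  qed
qed

end
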